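(* Let $d,m$ be positive integers, let $a<b$ be real numbers and $\epsilon>0$, and let $T:\mathrm{MR}_d\to\mathrm{MR}_m$ be an affine linear operator which sends $[a,b]$-rooted polynomials to real-rooted polynomials. Let $\mathcal{A}$ be the set of all $[a,b]$-rooted $f\in\mathrm{MR}_d$ with $\operatorname{tr}(f)=\epsilon$ (assumed nonempty), and consider the problem of maximizing the largest zero of $T(f)$ over $f\in\mathcal{A}$. Then this maximal zero is achieved for some $T(f)$ with $f\in\mathcal{A}$ having at most one distinct zero in $(a,b)$. Moreover, if the maximal zero above is achieved for some $T(f)$ where $f\in\mathcal{A}$ is $(a,b)$-rooted, then the maximal zero is also achieved for $T\big((t-\epsilon/d)^d\big)$.
   Context: $\mathrm{MR}_d$ denotes the affine space of all monic real univariate polynomials of degree $d$. For an interval $I\subseteq\mathbb{R}$, a polynomial is $I$-rooted if all its zeros lie in $I$. The trace $\operatorname{tr}(f)$ of a non-constant polynomial $f$ is the sum of its zeros counted with multiplicity. *)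

theory Defs
  imports Complex_Main "HOL-Computational_Algebra.Computational_Algebra"
begin

definition MR :: "nat \<Rightarrow> real poly set" where
  "MR d = {f. degree f = d \<and> lead_coeff f = 1}"

definition czeros :: "real poly \<Rightarrow> complex set" where
  "czeros f = {z. poly (map_poly complex_of_real f) z = 0}"

definition rooted_in :: "real set \<Rightarrow> real poly \<Rightarrow> bool" where
  "rooted_in I f \<longleftrightarrow> czeros f \<subseteq> complex_of_real ` I"

abbreviation real_rooted :: "real poly \<Rightarrow> bool" where
  "real_rooted f \<equiv> rooted_in UNIV f"

definition tr :: "real poly \<Rightarrow> complex" where
  "tr f = sum_mset (proots (map_poly complex_of_real f))"

definition maxroot :: "real poly \<Rightarrow> real" where
  "maxroot p = Max {x. poly p x = 0}"

definition affine_op :: "nat \<Rightarrow> nat \<Rightarrow> (real poly \<Rightarrow> real poly) \<Rightarrow> bool" where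
  "affine_op d m T \<longleftrightarrow> (\<forall>f\<in>MR d. T f \<in> MR m) \<and>
     (\<forall>f\<in>MR d. \<forall>g\<in>MR d. \<forall>c::real.
        T (smult c f + smult (1 - c) g) = smult c (T f) + smult (1 - c) (T g))"

end

theory Submission
  imports Defs
begin

definition PR :: "real multiset \<Rightarrow> real poly" where
  "PR R = (\<Prod>z\<in>#R. [:-z,1:])"

lemma map_poly_of_real_mult:
  "map_poly complex_of_real (p * q) = map_poly complex_of_real p * map_poly complex_of_real q"
  by (intro poly_eqI) (simp add: coeff_map_poly coeff_mult)

lemma map_PR: "map_poly complex_of_real (PR R) = (\<Prod>z\<in>#image_mset complex_of_real R. [:-z,1:])"
  unfolding PR_def
proof (induction R)
  case empty then show ?case by simp
next
  case (add x R)
  have "map_poly complex_of_real [:-x,1:] = [:- complex_of_real x, 1:]"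
    by (simp add: map_poly_pCons)
  then show ?case using add by (simp add: map_poly_of_real_mult del: mult_pCons_left)
qed

lemma poly_PR: "poly (PR R) t = (\<Prod>z\<in>#R. t - z)"
  unfolding PR_def by (simp add: poly_prod_mset)

lemma PR_add: "PR (R + S) = PR R * PR S"
  unfolding PR_def by simp

lemma PR_add_mset: "PR (add_mset x R) = [:-x,1:] * PR R"
  unfolding PR_def by simp

lemma degree_PR: "degree (PR R) = size R"
proof (induction R)
  case empty then show ?case by (simp add: PR_def)
next
  case (add x R)
  have "PR R \<noteq> 0" by (auto simp add: PR_def prod_mset_zero_iff)
  then show ?case using add by (simp add: PR_add_mset degree_mult_eq del: mult_pCons_left)
qed

lemma lead_PR: "lead_coeff (PR R) = 1"
proof (induction R)
  case empty then show ?case by (simp add: PR_def)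
next
  case (add x R)
  then show ?case by (simp only: PR_add_mset lead_coeff_mult add.IH) simp
qed

lemma PR_MR: "PR R \<in> MR (size R)"
  using lead_PR[of R] degree_PR[of R] by (simp add: MR_def)

lemma PR_roots: "{x. poly (PR R) x = 0} = set_mset R"
  by (auto simp: poly_PR prod_mset_zero_iff)

lemma czeros_PR: "czeros (PR R) = complex_of_real ` set_mset R"
  by (auto simp: czeros_def map_PR poly_prod_mset prod_mset_zero_iff)

lemma proots_cPR: "proots (\<Prod>z\<in>#(Q::complex multiset). [:-z,1:]) = Q"
  proof (induction Q)
  case (add x Q)
  have "(\<Prod>z\<in>#Q. [:-z,1:]) \<noteq> 0" by (auto simp add: prod_mset_zero_iff)
  then show ?case using add by (simp add: proots_mult del: mult_pCons_left)
qed simp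

lemma of_real_sum_mset': "complex_of_real (sum_mset R) = sum_mset (image_mset complex_of_real R)"
  by (induction R) simp_all

lemma tr_PR: "tr (PR R) = complex_of_real (sum_mset R)"
  by (simp add: tr_def map_PR proots_cPR of_real_sum_mset')

lemma map_poly_of_real_inj:
  assumes "map_poly complex_of_real p = map_poly complex_of_real q" shows "p = q"
proof (intro poly_eqI)
  fix n
  have "coeff (map_poly complex_of_real p) n = coeff (map_poly complex_of_real q) n" using assms by simp
  then show "coeff p n = coeff q n" by (simp add: coeff_map_poly)
qed

lemma rooted_PR:
  assumes "f \<in> MR d" "rooted_in I f"
  shows "\<exists>R. f = PR R \<and> size R = d \<and> set_mset R \<subseteq> I"
proof -
  define F where "F = map_poly complex_of_real f"
  have degF: "degree F = d" using assms(1) by (simp add: F_def degree_map_poly MR_def)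
  have lF: "lead_coeff F = 1" using assms(1) unfolding MR_def by (auto simp add: F_def degree_map_poly coeff_map_poly)
  have F: "F = (\<Prod>x\<in>#proots F. [:-x, 1:])"
    using complex_poly_decompose_multiset[of F] lF by simp
  have re: "z = complex_of_real (Re z) \<and> Re z \<in> I" if "z \<in># proots F" for z
  proof -
    have "F \<noteq> 0" using lF by auto
    then have "poly F z = 0" using that by simp
    then have "z \<in> czeros f" by (simp add: czeros_def F_def)
    then obtain r where "r \<in> I" "z = complex_of_real r" using assms(2) by (auto simp: rooted_in_def)
    then show ?thesis by simp
  qed
  define R where "R = image_mset Re (proots F)"
  have "image_mset (\<lambda>z. complex_of_real (Re z)) (proots F) = image_mset (\<lambda>z. z) (proots F)"
    by (rule image_mset_cong) (use re in auto)
  then have "image_mset complex_of_real R = proots F" by (simp add: R_def multiset.map_comp o_def)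
  then have "map_poly complex_of_real (PR R) = map_poly complex_of_real f"
    using F by (simp add: map_PR F_def[symmetric])
  then have "f = PR R" by (rule map_poly_of_real_inj[symmetric])
  moreover have "size R = d" using degF by (simp add: R_def size_proots_complex)
  moreover have "set_mset R \<subseteq> I" using re by (auto simp: R_def)
  ultimately show ?thesis by blast
qed

lemma PR_pos: "(\<forall>z\<in>#R. z < t) \<Longrightarrow> poly (PR R) t > 0"
  unfolding poly_PR by (induction R) auto

lemma maxroot_PR_in: "R \<noteq> {#} \<Longrightarrow> maxroot (PR R) \<in># R"
  unfolding maxroot_def PR_roots by (rule Max_in) auto

lemma maxroot_PR_ge: "z \<in># R \<Longrightarrow> z \<le> maxroot (PR R)"
  unfolding maxroot_def PR_roots by (rule Max_ge) auto

lemma PR_pair: "PR (S + {#u,v#}) = PR S * [:u*v, -(u+v), 1:]"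
proof -
  have h: "PR {#u,v#} = [:u*v, -(u+v), 1:]" by (simp add: PR_def algebra_simps)
  have "PR (S + {#u,v#}) = PR S * PR {#u,v#}" by (rule PR_add)
  then show ?thesis by (simp only: h)
qed

lemma comb_quad: fixes c q1 q2 w :: real shows "smult c (p * [:q1,w,1:]) + smult (1-c) (p * [:q2,w,1:]) = p * [:c*q1+(1-c)*q2, w, 1:]"
proof -
  have "smult c [:q1,w,1:] + smult (1-c) [:q2,w,1:] = [:c*q1+(1-c)*q2, w, 1:]"
  proof -
    have "c*w + (1-c)*w = w" by (simp add: left_diff_distrib)
    moreover have "c*q1+(1-c)*q2 = c*q1+(1-c)*q2" ..
    ultimately show ?thesis by (simp add: ac_simps)
  qed
  then show ?thesis by (metis mult_smult_right distrib_left)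
qed

lemma mean_aux: fixes M :: "real multiset"
  shows "(\<forall>z\<in>#M. \<mu> \<le> z) \<Longrightarrow> real (size M) * \<mu> \<le> sum_mset M"
  by (induction M) (auto simp: algebra_simps)

lemma mean_aux2: fixes M :: "real multiset"
  shows "(\<forall>z\<in>#M. \<mu> \<le> z) \<Longrightarrow> (\<exists>z\<in>#M. \<mu> < z) \<Longrightarrow> real (size M) * \<mu> < sum_mset M"
proof (induction M)
  case empty then show ?case by simp
next
  case (add x M)
  show ?case
  proof (cases "\<mu> < x")
    case True
    then show ?thesis using mean_aux[of M \<mu>] add.prems by (auto simp: algebra_simps)
  next
    case False
    then have "\<exists>z\<in>#M. \<mu> < z" "x = \<mu>" using add.prems by auto
    then show ?thesis using add by (auto simp: algebra_simps)
  qed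
qed

lemma mean_aux3: fixes M :: "real multiset"
  shows "(\<forall>z\<in>#M. z \<le> \<mu>) \<Longrightarrow> (\<exists>z\<in>#M. z < \<mu>) \<Longrightarrow> sum_mset M < real (size M) * \<mu>"
proof -
  have neg: "sum_mset (image_mset uminus M) = - sum_mset M" by (induction M) auto
  assume a1: "\<forall>z\<in>#M. z \<le> \<mu>" and a2: "\<exists>z\<in>#M. z < \<mu>"
  have "real (size (image_mset uminus M)) * (-\<mu>) < sum_mset (image_mset uminus M)"
    by (rule mean_aux2) (use a1 a2 in auto)
  then show ?thesis using neg by simp
qed

lemma mean_split: fixes M :: "real multiset"
  assumes "size M > 0" "z \<in># M" "z \<noteq> sum_mset M / size M"
  shows "\<exists>x\<in>#M. x < sum_mset M / size M" "\<exists>y\<in>#M. y > sum_mset M / size M"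
proof -
  define \<mu> where "\<mu> = sum_mset M / size M"
  have s: "sum_mset M = real (size M) * \<mu>" using assms(1) by (simp add: \<mu>_def)
  show "\<exists>x\<in>#M. x < sum_mset M / size M"
  proof (rule ccontr)
    assume "\<not> ?thesis"
    then have "\<forall>w\<in>#M. \<mu> \<le> w" by (auto simp: \<mu>_def not_less)
    moreover have "\<exists>w\<in>#M. \<mu> < w" using assms(2,3) calculation unfolding \<mu>_def[symmetric] by force
    ultimately show False using mean_aux2 s by force
  qed
  show "\<exists>y\<in>#M. y > sum_mset M / size M"
  proof (rule ccontr)
    assume "\<not> ?thesis"
    then have "\<forall>w\<in>#M. w \<le> \<mu>" by (auto simp: \<mu>_def not_less)
    moreover have "\<exists>w\<in>#M. w < \<mu>" using assms(2,3) calculation unfolding \<mu>_def[symmetric] by force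
    ultimately show False using mean_aux3 s by force
  qed
qed

lemma mset_split2: "x \<in># R \<Longrightarrow> y \<in># R \<Longrightarrow> x \<noteq> y \<Longrightarrow> \<exists>S. R = S + {#x,y#}"
proof -
  assume "x \<in># R" "y \<in># R" "x \<noteq> y"
  then obtain R1 where R1: "R = add_mset x R1" by (metis multi_member_split)
  then have "y \<in># R1" using \<open>y \<in># R\<close> \<open>x \<noteq> y\<close> by auto
  then obtain S where "R1 = add_mset y S" by (metis multi_member_split)
  then show ?thesis using R1 by auto
qed

lemma all_eq_replicate: "(\<forall>z\<in>#R. z = \<mu>) \<Longrightarrow> R = replicate_mset (size R) \<mu>"
  by (induction R) auto

locale Lctx =
  fixes d m :: nat and a b \<epsilon> :: real and T :: "real poly \<Rightarrow> real poly"
  assumes d_pos: "d > 0" and m_pos: "m > 0" and ab: "a < b" and aff: "affine_op d m T"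
    and rr_ok: "\<forall>f\<in>MR d. rooted_in {a..b} f \<longrightarrow> real_rooted (T f)"
begin

definition good where "good R \<longleftrightarrow> size R = d \<and> set_mset R \<subseteq> {a..b} \<and> sum_mset R = \<epsilon>"
definition rr where "rr R = maxroot (T (PR R))"

lemma good_MR: "good R \<Longrightarrow> PR R \<in> MR d"
  using PR_MR[of R] by (simp add: good_def)

lemma good_rooted: "good R \<Longrightarrow> rooted_in {a..b} (PR R)"
  by (auto simp: good_def rooted_in_def czeros_PR)

lemma T_PR: assumes "good R" obtains R' where "T (PR R) = PR R'" "size R' = m"
proof -
  have "T (PR R) \<in> MR m" using aff good_MR[OF assms] by (simp add: affine_op_def)
  moreover have "real_rooted (T (PR R))" using rr_ok good_MR[OF assms] good_rooted[OF assms] by blast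
  ultimately show ?thesis using rooted_PR that by blast
qed

lemma root_rr: assumes "good R" shows "poly (T (PR R)) (rr R) = 0"
proof -
  obtain R' where R': "T (PR R) = PR R'" "size R' = m" using T_PR[OF assms] .
  then have "R' \<noteq> {#}" using m_pos by auto
  then have "rr R \<in># R'" using maxroot_PR_in R' by (simp add: rr_def)
  then show ?thesis by (simp add: R' poly_PR prod_mset_zero_iff)
qed

lemma le_rr: assumes "good R" "poly (T (PR R)) t = 0" shows "t \<le> rr R"
proof -
  obtain R' where R': "T (PR R) = PR R'" "size R' = m" using T_PR[OF assms(1)] .
  then have "t \<in># R'" using assms(2) PR_roots[of R'] by auto
  then show ?thesis using maxroot_PR_ge R' by (simp add: rr_def)
qed

lemma pos_rr: assumes "good R" "rr R < t" shows "poly (T (PR R)) t > 0"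
proof -
  obtain R' where R': "T (PR R) = PR R'" "size R' = m" using T_PR[OF assms(1)] .
  have "\<forall>z\<in>#R'. z < t" using maxroot_PR_ge[of _ R'] R' assms(2) by (force simp: rr_def)
  then show ?thesis using PR_pos R' by simp
qed

lemma T_comb: assumes "f \<in> MR d" "g \<in> MR d"
  shows "poly (T (smult c f + smult (1-c) g)) t = c * poly (T f) t + (1-c) * poly (T g) t"
  using aff assms by (simp add: affine_op_def)

lemma move:
  assumes g1: "good (S + {#u1,v1#})" and g0: "good (S + {#u0,v0#})" and g2: "good (S + {#u2,v2#})"
    and s: "u1+v1 = s" "u0+v0 = s" "u2+v2 = s"
    and q: "u1*v1 < u0*v0" "u0*v0 < u2*v2"
  shows "rr (S + {#u0,v0#}) \<le> max (rr (S + {#u1,v1#})) (rr (S + {#u2,v2#}))"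
    and "rr (S + {#u1,v1#}) \<le> rr (S + {#u0,v0#}) \<Longrightarrow> rr (S + {#u0,v0#}) \<le> rr (S + {#u2,v2#})"
proof -
  define q1 q0 q2 where "q1 = u1*v1" "q0 = u0*v0" "q2 = u2*v2"
  define P1 P0 P2 where "P1 = PR (S + {#u1,v1#})" "P0 = PR (S + {#u0,v0#})" "P2 = PR (S + {#u2,v2#})"
  have P: "P1 = PR S * [:q1, -s, 1:]" "P0 = PR S * [:q0, -s, 1:]" "P2 = PR S * [:q2, -s, 1:]"
    unfolding P1_P0_P2_def q1_q0_q2_def PR_pair s by simp_all
  have M: "P1 \<in> MR d" "P0 \<in> MR d" "P2 \<in> MR d"
    using g1 g0 g2 good_MR by (simp_all add: P1_P0_P2_def)
  define c where "c = (q2-q0)/(q2-q1)"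
  have "c*q1+(1-c)*q2 = q0"
  proof -
    have ne: "q2 - q1 \<noteq> 0" using q unfolding q1_q0_q2_def[symmetric] by simp
    have "c*(q2-q1) = q2-q0" using ne by (simp add: c_def)
    moreover have "c*q1+(1-c)*q2 = q2 - c*(q2-q1)" by (simp add: algebra_simps)
    ultimately show ?thesis by simp
  qed
  then have "P0 = smult c P1 + smult (1-c) P2" using P comb_quad[of c "PR S" q1 "-s" q2] by simp
  then have T0: "poly (T P0) t = c * poly (T P1) t + (1-c) * poly (T P2) t" for t
    using T_comb[OF M(1) M(3)] by simp
  have c01: "0 < c" "c < 1" using q unfolding c_def q1_q0_q2_def[symmetric] by (simp_all add: field_simps)
  show A: "rr (S + {#u0,v0#}) \<le> max (rr (S + {#u1,v1#})) (rr (S + {#u2,v2#}))"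
  proof (rule ccontr)
    assume "\<not> ?thesis"
    then have "poly (T P1) (rr (S + {#u0,v0#})) > 0" "poly (T P2) (rr (S + {#u0,v0#})) > 0"
      using pos_rr[OF g1] pos_rr[OF g2] by (auto simp: P1_P0_P2_def)
    then have "poly (T P0) (rr (S + {#u0,v0#})) > 0" using T0 c01
      by (simp add: add_pos_pos)
    then show False using root_rr[OF g0] by (simp add: P1_P0_P2_def)
  qed
  assume le: "rr (S + {#u1,v1#}) \<le> rr (S + {#u0,v0#})"
  show "rr (S + {#u0,v0#}) \<le> rr (S + {#u2,v2#})"
  proof (rule ccontr)
    assume lt: "\<not> ?thesis"
    let ?r = "rr (S + {#u0,v0#})"
    have eq: "rr (S + {#u1,v1#}) = ?r" using A lt le by linarith
    define c' where "c' = (q0-q2)/(q0-q1)"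
    have "c'*q1+(1-c')*q0 = q2"
    proof -
      have ne: "q0 - q1 \<noteq> 0" using q unfolding q1_q0_q2_def[symmetric] by simp
      have "c'*(q0-q1) = q0-q2" using ne by (simp add: c'_def)
      moreover have "c'*q1+(1-c')*q0 = q0 - c'*(q0-q1)" by (simp add: algebra_simps)
      ultimately show ?thesis by simp
    qed
    then have "P2 = smult c' P1 + smult (1-c') P0" using P comb_quad[of c' "PR S" q1 "-s" q0] by simp
    then have "poly (T P2) ?r = c' * poly (T P1) ?r + (1-c') * poly (T P0) ?r"
      using T_comb[OF M(1) M(2)] by simp
    also have "\<dots> = 0" using root_rr[OF g1] root_rr[OF g0] eq by (simp add: P1_P0_P2_def)
    finally have "?r \<le> rr (S + {#u2,v2#})" using le_rr[OF g2] by (simp add: P1_P0_P2_def)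
    then show False using lt by simp
  qed
qed


lemma step:
  assumes g: "good (S + {#x,y#})" and ax: "a < x" and xm: "x < \<mu>" and my: "\<mu> < y" and yb: "y < b"
  defines "\<delta> \<equiv> min (x-a) (b-y)" and "\<eta> \<equiv> min (\<mu>-x) (y-\<mu>)"
  shows "good (S + {#x-\<delta>, y+\<delta>#})" "good (S + {#x+\<eta>, y-\<eta>#})"
    "rr (S + {#x,y#}) \<le> max (rr (S + {#x-\<delta>, y+\<delta>#})) (rr (S + {#x+\<eta>, y-\<eta>#}))"
    "rr (S + {#x-\<delta>, y+\<delta>#}) \<le> rr (S + {#x,y#}) \<Longrightarrow> rr (S + {#x,y#}) \<le> rr (S + {#x+\<eta>, y-\<eta>#})"
    "x-\<delta> = a \<or> y+\<delta> = b" "x+\<eta> = \<mu> \<or> y-\<eta> = \<mu>"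
    "x \<le> x+\<eta>" "x+\<eta> < y" "x < y-\<eta>" "y-\<eta> \<le> y"
proof -
  have d0: "\<delta> > 0" "\<delta> \<le> x-a" "\<delta> \<le> b-y" using ax yb by (auto simp: \<delta>_def)
  have e0: "\<eta> > 0" "\<eta> \<le> \<mu>-x" "\<eta> \<le> y-\<mu>" using xm my by (auto simp: \<eta>_def)
  show "x-\<delta> = a \<or> y+\<delta> = b" by (auto simp: \<delta>_def min_def)
  show "x+\<eta> = \<mu> \<or> y-\<eta> = \<mu>" by (auto simp: \<eta>_def min_def)
  show "x \<le> x+\<eta>" "x+\<eta> < y" "x < y-\<eta>" "y-\<eta> \<le> y" using e0 xm my by linarith+
  have gs: "size S + 2 = d" "set_mset S \<subseteq> {a..b}" "sum_mset S + x + y = \<epsilon>"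
    using g by (auto simp: good_def)
  show g1: "good (S + {#x-\<delta>, y+\<delta>#})" using gs d0 ax yb xm my by (auto simp: good_def)
  show g2: "good (S + {#x+\<eta>, y-\<eta>#})" using gs e0 ax yb xm my by (auto simp: good_def)
  have q1: "(x-\<delta>)*(y+\<delta>) < x*y"
  proof -
    have "(x-\<delta>)*(y+\<delta>) = x*y - \<delta>*(y-x+\<delta>)" by (simp add: algebra_simps)
    moreover have "\<delta>*(y-x+\<delta>) > 0" using d0 xm my by (intro mult_pos_pos) auto
    ultimately show ?thesis by linarith
  qed
  have q2: "x*y < (x+\<eta>)*(y-\<eta>)"
  proof -
    have "(x+\<eta>)*(y-\<eta>) = x*y + \<eta>*(y-x-\<eta>)" by (simp add: algebra_simps)
    moreover have "\<eta>*(y-x-\<eta>) > 0" using e0 xm my by (intro mult_pos_pos) auto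
    ultimately show ?thesis by linarith
  qed
  have s: "(x-\<delta>)+(y+\<delta>) = x+y" "(x+\<eta>)+(y-\<eta>) = x+y" by simp_all
  show "rr (S + {#x,y#}) \<le> max (rr (S + {#x-\<delta>, y+\<delta>#})) (rr (S + {#x+\<eta>, y-\<eta>#}))"
    by (rule move(1)[OF g1 g g2 s(1) refl s(2) q1 q2])
  show "rr (S + {#x-\<delta>, y+\<delta>#}) \<le> rr (S + {#x,y#}) \<Longrightarrow> rr (S + {#x,y#}) \<le> rr (S + {#x+\<eta>, y-\<eta>#})"
    by (rule move(2)[OF g1 g g2 s(1) refl s(2) q1 q2])
qed


lemma part2:
  assumes max: "\<forall>R'. good R' \<longrightarrow> rr R' \<le> M"
  shows "good R \<Longrightarrow> set_mset R \<subseteq> {a<..<b} \<Longrightarrow> M \<le> rr R \<Longrightarrow> M \<le> rr (replicate_mset d (\<epsilon>/d))"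
proof (induction "size (filter_mset (\<lambda>z. z \<noteq> \<epsilon>/d) R)" arbitrary: R rule: less_induct)
  case less
  define \<mu> where "\<mu> = \<epsilon>/d"
  show ?case
  proof (cases "\<forall>z\<in>#R. z = \<mu>")
    case True
    then have "R = replicate_mset (size R) \<mu>" by (rule all_eq_replicate)
    then show ?thesis using less.prems by (simp add: good_def \<mu>_def)
  next
    case False
    then obtain z where z: "z \<in># R" "z \<noteq> \<mu>" by auto
    have sz: "size R = d" "sum_mset R = \<epsilon>" using less.prems by (auto simp: good_def)
    have mu: "\<mu> = sum_mset R / size R" using sz by (simp add: \<mu>_def)
    have pos: "size R > 0" using sz d_pos by simp
    obtain x where x: "x \<in># R" "x < \<mu>" using mean_split(1)[OF pos z(1)] z(2) mu by auto
    obtain y where y: "y \<in># R" "y > \<mu>" using mean_split(2)[OF pos z(1)] z(2) mu by auto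
    obtain S where S: "R = S + {#x,y#}" using mset_split2[OF x(1) y(1)] x y by force
    have ax: "a < x" "y < b" using less.prems(2) x(1) y(1) by auto
    define \<delta> where "\<delta> = min (x-a) (b-y)"
    define \<eta> where "\<eta> = min (\<mu>-x) (y-\<mu>)"
    note st = step[of S x y \<mu>, folded \<delta>_def \<eta>_def, OF less.prems(1)[unfolded S] ax(1) x(2) y(2) ax(2)]
    have "rr (S + {#x-\<delta>, y+\<delta>#}) \<le> rr R" using max st(1) less.prems(3) by force
    then have r2: "M \<le> rr (S + {#x+\<eta>, y-\<eta>#})" using st(4) less.prems(3) S by force
    have in2: "set_mset (S + {#x+\<eta>, y-\<eta>#}) \<subseteq> {a<..<b}"
      using less.prems(2) S st(7-10) ax by auto
    have "size (filter_mset (\<lambda>z. z \<noteq> \<epsilon>/d) (S + {#x+\<eta>, y-\<eta>#})) < size (filter_mset (\<lambda>z. z \<noteq> \<epsilon>/d) R)"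
      using st(6) x(2) y(2) unfolding S \<mu>_def by auto
    then show ?thesis using less.hyps st(2) in2 r2 by blast
  qed
qed


definition IntR where "IntR R = filter_mset (\<lambda>z. a < z \<and> z < b) R"
definition kk where "kk R = size (filter_mset (\<lambda>z. z \<noteq> sum_mset (IntR R) / size (IntR R)) (IntR R))"
definition phi where "phi R = size (IntR R) * (d+1) + kk R"

lemma kk_le: "kk R \<le> size (IntR R)"
  unfolding kk_def by (rule size_filter_mset_lesseq)

lemma part1:
  shows "good R \<Longrightarrow> \<exists>R'. good R' \<and> card (set_mset (IntR R')) \<le> 1 \<and> rr R \<le> rr R'"
proof (induction "phi R" arbitrary: R rule: less_induct)
  case less
  show ?case
  proof (cases "card (set_mset (IntR R)) \<le> 1")
    case True
    then show ?thesis using less.prems by blast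
  next
    case False
    define N where "N = IntR R"
    define \<mu> where "\<mu> = sum_mset N / size N"
    have nd: "size N \<le> d" using less.prems unfolding N_def IntR_def good_def
      by (metis size_filter_mset_lesseq)
    have cardN: "card (set_mset N) \<ge> 2" using False by (simp add: N_def)
    have "card (set_mset N) \<le> size N" by (induction N) (auto simp: card_insert_if)
    then have szN: "size N \<ge> 2" using cardN by linarith
    then have pos: "size N > 0" by simp
    have "\<exists>z\<in>#N. z \<noteq> \<mu>"
    proof (rule ccontr)
      assume "\<not> ?thesis"
      then have "set_mset N \<subseteq> {\<mu>}" by auto
      then have "card (set_mset N) \<le> 1" by (metis card.empty card_insert_if card_mono finite.emptyI finite.insertI insert_absorb subset_singletonD le_numeral_extra(4) One_nat_def zero_le_one)
      then show False using cardN by simp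
    qed
    then obtain z where z: "z \<in># N" "z \<noteq> \<mu>" by auto
    obtain x where x: "x \<in># N" "x < \<mu>" using mean_split(1)[OF pos z(1)] z(2) by (auto simp: \<mu>_def)
    obtain y where y: "y \<in># N" "y > \<mu>" using mean_split(2)[OF pos z(1)] z(2) by (auto simp: \<mu>_def)
    have xR: "x \<in># R" "a < x" "x < b" using x(1) by (auto simp: N_def IntR_def)
    have yR: "y \<in># R" "a < y" "y < b" using y(1) by (auto simp: N_def IntR_def)
    obtain S where S: "R = S + {#x,y#}" using mset_split2[OF xR(1) yR(1)] x y by force
    define \<delta> where "\<delta> = min (x-a) (b-y)"
    define \<eta> where "\<eta> = min (\<mu>-x) (y-\<mu>)"
    note st = step[of S x y \<mu>, folded \<delta>_def \<eta>_def, OF less.prems(1)[unfolded S] xR(2) x(2) y(2) yR(3)]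
    define R1 where "R1 = S + {#x-\<delta>, y+\<delta>#}"
    define R2 where "R2 = S + {#x+\<eta>, y-\<eta>#}"
    have NS: "N = IntR S + {#x,y#}" using xR yR by (simp add: N_def S IntR_def)
    show ?thesis
    proof (cases "rr R \<le> rr R1")
      case True
      have "size (IntR R1) \<le> size (IntR S) + 1"
        using st(5) ab by (auto simp: R1_def IntR_def)
      then have sI1: "size (IntR R1) + 1 \<le> size N" using NS by simp
      have "phi R1 < phi R"
      proof -
        have "kk R1 \<le> d" using kk_le[of R1] sI1 nd by linarith
        then have "phi R1 < (size (IntR R1) + 1) * (d+1)" by (simp add: phi_def)
        also have "\<dots> \<le> size N * (d+1)" using sI1 by (intro mult_le_mono1)
        also have "\<dots> \<le> phi R" by (simp add: phi_def N_def)
        finally show ?thesis .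
      qed
      then obtain R' where "good R'" "card (set_mset (IntR R')) \<le> 1" "rr R1 \<le> rr R'"
        using less.hyps st(1) R1_def by blast
      then show ?thesis using True by force
    next
      case False
      then have r2: "rr R \<le> rr R2" using st(3) S R1_def R2_def by force
      have I2: "IntR R2 = IntR S + {#x+\<eta>, y-\<eta>#}"
        using st(7-10) xR yR by (simp add: R2_def IntR_def)
      have szI2: "size (IntR R2) = size N" using I2 NS by simp
      have sumI2: "sum_mset (IntR R2) = sum_mset N" using I2 NS by simp
      have mu2: "sum_mset (IntR R2) / size (IntR R2) = \<mu>" using szI2 sumI2 by (simp add: \<mu>_def)
      have "kk R2 < kk R"
        unfolding kk_def mu2 N_def[symmetric] \<mu>_def[symmetric] using st(6) x(2) y(2) I2 NS by auto
      then have "phi R2 < phi R" using szI2 by (simp add: phi_def N_def)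
      then obtain R' where "good R'" "card (set_mset (IntR R')) \<le> 1" "rr R2 \<le> rr R'"
        using less.hyps st(2) R2_def by blast
      then show ?thesis using r2 by force
    qed
  qed
qed


lemma cand_finite: "finite {R. good R \<and> card (set_mset (IntR R)) \<le> 1}"
proof -
  define V where "V = {a,b} \<union> (\<lambda>(k,l). (\<epsilon> - real k*a - real l*b)/(real d - real k - real l)) ` ({..d}\<times>{..d})"
  have fV: "finite V" by (simp add: V_def)
  have "{R. good R \<and> card (set_mset (IntR R)) \<le> 1} \<subseteq> multisets_of_size V d"
  proof
    fix R assume "R \<in> {R. good R \<and> card (set_mset (IntR R)) \<le> 1}"
    then have g: "good R" and c: "card (set_mset (IntR R)) \<le> 1" by auto
    have "set_mset R \<subseteq> V"
    proof
      fix w assume w: "w \<in># R"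
      show "w \<in> V"
      proof (cases "w = a \<or> w = b")
        case True then show ?thesis by (auto simp: V_def)
      next
        case False
        then have wi: "a < w" "w < b" using g w by (force simp: good_def)+
        then have wI: "w \<in># IntR R" using w by (simp add: IntR_def)
        have only: "v = a \<or> v = b \<or> v = w" if "v \<in># R" for v
        proof (rule ccontr)
          assume nv: "\<not> ?thesis"
          then have "v \<in># IntR R" using that g by (force simp: IntR_def good_def)
          then show False using c wI nv card_le_Suc0_iff_eq[of "set_mset (IntR R)"] by auto
        qed
        define k where "k = count R a"
        define l where "l = count R b"
        define j where "j = count R w"
        have Req: "R = replicate_mset k a + replicate_mset l b + replicate_mset j w"
        proof (rule multiset_eqI)
          fix v
          show "count R v = count (replicate_mset k a + replicate_mset l b + replicate_mset j w) v"
          proof (cases "v \<in># R")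
            case True
            then show ?thesis using only[OF True] False ab by (auto simp: k_def l_def j_def)
          next
            case nv: False
            then show ?thesis by (auto simp: k_def l_def j_def not_in_iff)
          qed
        qed
        have j0: "j > 0" using w by (simp add: j_def)
        have sz: "k + l + j = d" using g Req by (simp add: good_def)
        have sm: "real k * a + real l * b + real j * w = \<epsilon>" using g Req by (simp add: good_def)
        have jr: "real j = real d - real k - real l" using sz by linarith
        have "w = (\<epsilon> - real k*a - real l*b)/(real d - real k - real l)"
          using sm j0 jr[symmetric] by (simp add: field_simps)
        moreover have "(k,l) \<in> {..d}\<times>{..d}" using sz by auto
        ultimately show ?thesis unfolding V_def by force
      qed
    qed
    then show "R \<in> multisets_of_size V d" using g by (simp add: multisets_of_size_def good_def)
  qed
  then show ?thesis using finite_multisets_of_size[OF fV] finite_subset by blast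
qed

end


theorem lemma6p9:
  fixes d m :: nat and a b \<epsilon> :: real and T :: "real poly \<Rightarrow> real poly"
    and \<A> :: "real poly set"
  assumes "d > 0" and "m > 0" and "a < b" and "\<epsilon> > 0"
    and "affine_op d m T"
    and "\<forall>f\<in>MR d. rooted_in {a..b} f \<longrightarrow> real_rooted (T f)"
    and A_def: "\<A> = {f \<in> MR d. rooted_in {a..b} f \<and> tr f = complex_of_real \<epsilon>}"
    and "\<A> \<noteq> {}"
  shows "(\<exists>f\<in>\<A>. card {x. poly f x = 0 \<and> a < x \<and> x < b} \<le> 1 \<and>
            (\<forall>g\<in>\<A>. maxroot (T g) \<le> maxroot (T f)))
       \<and> ((\<exists>f\<in>\<A>. rooted_in {a<..<b} f \<and> (\<forall>g\<in>\<A>. maxroot (T g) \<le> maxroot (T f)))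
           \<longrightarrow> (\<forall>g\<in>\<A>. maxroot (T g) \<le> maxroot (T ([:- \<epsilon> / real d, 1:] ^ d))))"
proof -
  interpret L: Lctx d m a b \<epsilon> T
    by unfold_locales (use assms in auto)
  have inA: "f \<in> \<A> \<longleftrightarrow> (\<exists>R. L.good R \<and> f = PR R)" for f
  proof
    assume "f \<in> \<A>"
    then have f: "f \<in> MR d" "rooted_in {a..b} f" "tr f = complex_of_real \<epsilon>" by (auto simp: A_def)
    obtain R where R: "f = PR R" "size R = d" "set_mset R \<subseteq> {a..b}" using rooted_PR[OF f(1,2)] by blast
    have "sum_mset R = \<epsilon>" using f(3) R(1) tr_PR by simp
    then show "\<exists>R. L.good R \<and> f = PR R" using R by (auto simp: L.good_def)
  next
    assume "\<exists>R. L.good R \<and> f = PR R"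
    then obtain R where "L.good R" "f = PR R" by blast
    then show "f \<in> \<A>" using L.good_MR L.good_rooted tr_PR by (auto simp: A_def L.good_def)
  qed
  have rrdef: "maxroot (T (PR R)) = L.rr R" for R by (simp add: L.rr_def)
  define C where "C = {R. L.good R \<and> card (set_mset (L.IntR R)) \<le> 1}"
  have fC: "finite C" using L.cand_finite by (simp add: C_def)
  obtain f0 where "f0 \<in> \<A>" using assms(8) by blast
  then obtain R0 where "L.good R0" using inA by blast
  then obtain R1 where "R1 \<in> C" using L.part1 by (auto simp: C_def)
  then have neC: "L.rr ` C \<noteq> {}" by blast
  define M where "M = Max (L.rr ` C)"
  have "M \<in> L.rr ` C" unfolding M_def using fC neC by (intro Max_in) auto
  then obtain Rm where Rm: "Rm \<in> C" "L.rr Rm = M" by blast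
  have Mge: "L.rr R \<le> M" if "R \<in> C" for R unfolding M_def using fC that by (intro Max_ge) auto
  have conj1: "\<exists>f\<in>\<A>. card {x. poly f x = 0 \<and> a < x \<and> x < b} \<le> 1 \<and>
            (\<forall>g\<in>\<A>. maxroot (T g) \<le> maxroot (T f))"
  proof (rule bexI[of _ "PR Rm"], intro conjI ballI)
    show "PR Rm \<in> \<A>" using Rm(1) inA by (auto simp: C_def)
    have "{x. poly (PR Rm) x = 0 \<and> a < x \<and> x < b} = set_mset (L.IntR Rm)"
      using PR_roots[of Rm] by (auto simp: L.IntR_def)
    then show "card {x. poly (PR Rm) x = 0 \<and> a < x \<and> x < b} \<le> 1" using Rm(1) by (simp add: C_def)
    fix g assume "g \<in> \<A>"
    then obtain R where R: "L.good R" "g = PR R" using inA by blast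
    obtain R' where "L.good R'" "card (set_mset (L.IntR R')) \<le> 1" "L.rr R \<le> L.rr R'"
      using L.part1[OF R(1)] by blast
    then have "L.rr R \<le> M" using Mge[of R'] by (auto simp: C_def)
    then show "maxroot (T g) \<le> maxroot (T (PR Rm))" using R Rm by (simp add: rrdef)
  qed
  have conj2: "\<forall>g\<in>\<A>. maxroot (T g) \<le> maxroot (T ([:- \<epsilon> / real d, 1:] ^ d))"
    if H: "\<exists>f\<in>\<A>. rooted_in {a<..<b} f \<and> (\<forall>g\<in>\<A>. maxroot (T g) \<le> maxroot (T f))"
  proof -
    obtain f where f: "f \<in> \<A>" "rooted_in {a<..<b} f" "\<forall>g\<in>\<A>. maxroot (T g) \<le> maxroot (T f)"
      using H by blast
    obtain R where R: "L.good R" "f = PR R" using f(1) inA by blast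
    have "complex_of_real ` set_mset R \<subseteq> complex_of_real ` {a<..<b}"
      using f(2) R(2) by (simp add: rooted_in_def czeros_PR)
    then have Rin: "set_mset R \<subseteq> {a<..<b}" by (auto simp: inj_image_subset_iff[OF inj_of_real])
    have mx: "\<forall>R'. L.good R' \<longrightarrow> L.rr R' \<le> L.rr R"
    proof (intro allI impI)
      fix R' assume "L.good R'"
      then have "PR R' \<in> \<A>" using inA by blast
      then have "maxroot (T (PR R')) \<le> maxroot (T f)" using f(3) by blast
      then show "L.rr R' \<le> L.rr R" using R(2) by (simp add: rrdef)
    qed
    have c: "L.rr R \<le> L.rr (replicate_mset d (\<epsilon>/d))"
      using L.part2[OF mx R(1) Rin order_refl] .
    have "PR (replicate_mset d (\<epsilon>/d)) = [:- \<epsilon> / real d, 1:] ^ d"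
      by (simp add: PR_def)
    then have "maxroot (T f) \<le> maxroot (T ([:- \<epsilon> / real d, 1:] ^ d))"
      using c R(2) by (metis rrdef)
    then show ?thesis using f(3) by force
  qed
  show ?thesis using conj1 conj2 by blast
qed

end
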